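(* Let $T=(t_{ij})$ be an $\mathbb{N}$-tableau of shape $\lambda$ and let $\widehat{T}$ be its image under the toggle map defined in the context. Then \[|\widehat{T}|=\sum_{(i,j)\in\lambda}t_{ij}\,h_{\lambda}(i,j).\]
   Context: Partitions are drawn in English notation with matrix coordinates: the box in row $i$ and column $j$ is $(i,j)$. An $\mathbb{N}$-tableau of shape $\lambda$ is an assignment of a nonnegative integer to each box of $\lambda$; its weight $|T|$ is the sum of its entries. The hook $H_\lambda(i,j)$ is the set of boxes $(i,j')\in\lambda$ with $j'\ge j$ together with the boxes $(i',j)\in\lambda$ with $i'\ge i$, and $h_\lambda(i,j)=|H_\lambda(i,j)|$. A corner box is a box $(i,j)$ such that neither $(i+1,j)$ nor $(i,j+1)$ is a box. The toggle map $T\mapsto\widehat{T}$ is defined recursively: $\widehat{\emptyset}=\emptyset$; if $T'$ is obtained from $T$ by adding a corner box $(i,j)$ (of $\mathrm{sh}(T')$) with entry $x$, then $\widehat{T'}$ is obtained from $\widehat{T}$ as follows. For $k\ge1$ let $\beta_k,\gamma_k,\alpha_k$ be the entries of $\widehat{T}$ at $(i-k,j-k)$, $(i-k+1,j-k)$, $(i-k,j-k+1)$ respectively (taken to be $0$ if the box is not in $\mathrm{sh}(T)$). Then $\widehat{T'}$ agrees with $\widehat{T}$ except that for $1\le k<\min(i,j)$ the entry at $(i-k,j-k)$ becomes $\max(\alpha_{k+1},\gamma_{k+1})+\min(\alpha_k,\gamma_k)-\beta_k$, and the entry at $(i,j)$ is $\max(\alpha_1,\gamma_1)+x$. This is independent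 of the order in which boxes are added. *)

theory Defs
  imports Main
begin

text \<open>Partitions as weakly decreasing lists of positive parts; boxes are 1-indexed
  (row, column) pairs in English/matrix coordinates.\<close>

definition is_partition :: "nat list \<Rightarrow> bool" where
  "is_partition la \<longleftrightarrow> sorted_wrt (\<lambda>a b. a \<ge> b) la \<and> 0 \<notin> set la"

definition shape :: "nat list \<Rightarrow> (nat \<times> nat) set" where
  "shape la = {(i, j). 1 \<le> i \<and> i \<le> length la \<and> 1 \<le> j \<and> j \<le> la ! (i - 1)}"

definition hook :: "nat list \<Rightarrow> nat \<Rightarrow> nat \<Rightarrow> (nat \<times> nat) set" where
  "hook la i j = {(i', j'). (i', j') \<in> shape la \<and> i' = i \<and> j' \<ge> j}
                \<union> {(i', j'). (i', j') \<in> shape la \<and> j' = j \<and> i' \<ge> i}"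

definition hook_len :: "nat list \<Rightarrow> nat \<Rightarrow> nat \<Rightarrow> nat" where
  "hook_len la i j = card (hook la i j)"

text \<open>One step of the toggle map: the current image \<open>Th\<close> has shape \<open>S\<close>
  (entries outside \<open>S\<close> are read as 0); the corner box \<open>(i,j)\<close> is added with entry \<open>x\<close>.\<close>

definition toggle_step ::
  "(nat \<times> nat) set \<Rightarrow> (nat \<times> nat \<Rightarrow> int) \<Rightarrow> nat \<times> nat \<Rightarrow> int \<Rightarrow> (nat \<times> nat \<Rightarrow> int)" where
  "toggle_step S Th b x =
     (let (i, j) = b;
          g = (\<lambda>q. if q \<in> S then Th q else 0);
          \<alpha> = (\<lambda>k. g (i - k, j - k + 1));
          \<gamma> = (\<lambda>k. g (i - k + 1, j - k));
          \<beta> = (\<lambda>k. g (i - k, j - k))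
      in (\<lambda>p. if p = (i, j) then max (\<alpha> 1) (\<gamma> 1) + x
              else if (\<exists>k. 1 \<le> k \<and> k < min i j \<and> p = (i - k, j - k))
              then (let k = i - fst p in
                      max (\<alpha> (k + 1)) (\<gamma> (k + 1)) + min (\<alpha> k) (\<gamma> k) - \<beta> k)
              else g p))"

text \<open>Boxes of a shape in row reading order; each box is a corner of the shape
  formed by it and the preceding boxes.\<close>

definition boxes_order :: "nat list \<Rightarrow> (nat \<times> nat) list" where
  "boxes_order la =
     concat (map (\<lambda>i. map (\<lambda>j. (i, j)) [1..<la ! (i - 1) + 1]) [1..<length la + 1])"

definition toggle :: "nat list \<Rightarrow> (nat \<times> nat \<Rightarrow> nat) \<Rightarrow> (nat \<times> nat \<Rightarrow> int)" where
  "toggle la T =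
     fst (foldl (\<lambda>(Th, S) b. (toggle_step S Th b (int (T b)), insert b S))
                ((\<lambda>_. 0), {}) (boxes_order la))"

end

theory Submission
  imports Defs
begin


definition gS :: "(nat \<times> nat) set \<Rightarrow> (nat \<times> nat \<Rightarrow> int) \<Rightarrow> nat \<times> nat \<Rightarrow> int" where
  "gS S Th q = (if q \<in> S then Th q else 0)"

lemma ts_corner:
  assumes "1 \<le> i" "1 \<le> j"
  shows "toggle_step S Th (i, j) x (i, j) = max (gS S Th (i-1, j)) (gS S Th (i, j-1)) + x"
  using assms by (simp add: toggle_step_def gS_def Let_def)

lemma ts_unf:
  "toggle_step S Th (i, j) x p = (if p = (i, j) then max (gS S Th (i - 1, j - 1 + 1)) (gS S Th (i - 1 + 1, j - 1)) + x
              else if (\<exists>k. 1 \<le> k \<and> k < min i j \<and> p = (i - k, j - k))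
              then (let k = i - fst p in
                      max (gS S Th (i - (k+1), j - (k+1) + 1)) (gS S Th (i - (k+1) + 1, j - (k+1)))
                     + min (gS S Th (i - k, j - k + 1)) (gS S Th (i - k + 1, j - k)) - gS S Th (i-k, j-k))
              else gS S Th p)"
  unfolding toggle_step_def gS_def Let_def by simp

lemma ts_diag:
  assumes "1 \<le> k" "k < min i j"
  shows "toggle_step S Th (i, j) x (i-k, j-k) =
     max (gS S Th (i-(k+1), j-(k+1)+1)) (gS S Th (i-(k+1)+1, j-(k+1)))
     + min (gS S Th (i-k, j-k+1)) (gS S Th (i-k+1, j-k)) - gS S Th (i-k, j-k)"
proof -
  have 1: "(i-k, j-k) \<noteq> (i, j)" using assms by auto
  have 2: "\<exists>k'. 1 \<le> k' \<and> k' < min i j \<and> (i-k, j-k) = (i - k', j - k')" using assms by blast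
  have 3: "i - fst (i-k, j-k) = k" using assms by auto
  show ?thesis unfolding ts_unf if_not_P[OF 1] if_P[OF 2] Let_def 3 ..
qed

lemma ts_other:
  assumes "p \<noteq> (i, j)" "\<not> (\<exists>k. 1 \<le> k \<and> k < min i j \<and> p = (i - k, j - k))"
  shows "toggle_step S Th (i, j) x p = gS S Th p"
  using assms unfolding toggle_step_def gS_def Let_def by auto

definition dc :: "(nat \<times> nat) set \<Rightarrow> bool" where
  "dc S \<longleftrightarrow> (\<forall>a b. (a, b) \<in> S \<longrightarrow> 1 \<le> a \<and> 1 \<le> b \<and>
     (\<forall>a' b'. 1 \<le> a' \<longrightarrow> a' \<le> a \<longrightarrow> 1 \<le> b' \<longrightarrow> b' \<le> b \<longrightarrow> (a', b') \<in> S))"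

definition R :: "(nat \<times> nat \<Rightarrow> nat) \<Rightarrow> nat \<Rightarrow> nat \<Rightarrow> int" where
  "R T a b = (\<Sum>p\<in>{1..a}\<times>{1..b}. int (T p))"

definition diag :: "(nat \<times> nat) set \<Rightarrow> (nat \<times> nat \<Rightarrow> int) \<Rightarrow> nat \<Rightarrow> nat \<Rightarrow> int" where
  "diag S Th a b = (\<Sum>k<min a b. gS S Th (a - k, b - k))"

definition L :: "(nat \<times> nat \<Rightarrow> nat) \<Rightarrow> nat \<times> nat \<Rightarrow> int" where
  "L T q = R T (fst q) (snd q) - R T (fst q - 1) (snd q - 1)"

lemma dcD: "dc S \<Longrightarrow> (a, b) \<in> S \<Longrightarrow> 1 \<le> a' \<Longrightarrow> a' \<le> a \<Longrightarrow> 1 \<le> b' \<Longrightarrow> b' \<le> b \<Longrightarrow> (a', b') \<in> S"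
  unfolding dc_def by blast

lemma dc_pos: "dc S \<Longrightarrow> (a, b) \<in> S \<Longrightarrow> 1 \<le> a \<and> 1 \<le> b"
  unfolding dc_def by blast

lemma gS_out: "dc S \<Longrightarrow> a = 0 \<or> b = 0 \<Longrightarrow> gS S Th (a, b) = 0"
  unfolding gS_def using dc_pos by fastforce

lemma diag_ext:
  assumes "dc S" "min a b \<le> N"
  shows "(\<Sum>k<N. gS S Th (a - k, b - k)) = diag S Th a b"
  unfolding diag_def
proof (rule sum.mono_neutral_right)
  show "finite {..<N}" by simp
  show "{..<min a b} \<subseteq> {..<N}" using assms by auto
  show "\<forall>k\<in>{..<N} - {..<min a b}. gS S Th (a - k, b - k) = 0"
    using assms(1) by (auto intro!: gS_out)
qed

lemma R_zero: "a = 0 \<or> b = 0 \<Longrightarrow> R T a b = 0"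
  unfolding R_def by auto

lemma diag_zero: "a = 0 \<or> b = 0 \<Longrightarrow> diag S Th a b = 0"
  unfolding diag_def by auto

lemma R_step:
  assumes "1 \<le> i" "1 \<le> j"
  shows "R T i j = R T (i-1) j + R T i (j-1) - R T (i-1) (j-1) + int (T (i, j))"
proof -
  let ?f = "\<lambda>p. int (T p)"
  let ?A = "{1..i-1}\<times>{1..j}" and ?B = "{1..i}\<times>{1..j-1}"
  have AB: "?A \<inter> ?B = {1..i-1}\<times>{1..j-1}" by auto
  have U: "{1..i}\<times>{1..j} = insert (i, j) (?A \<union> ?B)" using assms by auto
  have nin: "(i, j) \<notin> ?A \<union> ?B" using assms by auto
  have "sum ?f (?A \<union> ?B) + sum ?f (?A \<inter> ?B) = sum ?f ?A + sum ?f ?B"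
    by (rule sum.union_inter) auto
  then show ?thesis unfolding R_def U AB using nin by (simp add: sum.insert)
qed



definition Inv :: "(nat \<times> nat \<Rightarrow> nat) \<Rightarrow> (nat \<times> nat) set \<Rightarrow> (nat \<times> nat \<Rightarrow> int) \<Rightarrow> bool" where
  "Inv T S Th \<longleftrightarrow> finite S \<and> dc S \<and> (\<forall>p\<in>S. 0 \<le> Th p) \<and>
     (\<forall>a b. (a, b) \<in> S \<longrightarrow> (a, b+1) \<in> S \<longrightarrow> Th (a, b) \<le> Th (a, b+1)) \<and>
     (\<forall>a b. (a, b) \<in> S \<longrightarrow> (a+1, b) \<in> S \<longrightarrow> Th (a, b) \<le> Th (a+1, b)) \<and>
     (\<forall>a b. (a, b) \<in> S \<longrightarrow> (a+1, b+1) \<notin> S \<longrightarrow> diag S Th a b = R T a b) \<and>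
     sum Th S = sum (L T) S"

definition addable :: "(nat \<times> nat) set \<Rightarrow> nat \<times> nat \<Rightarrow> bool" where
  "addable S q \<longleftrightarrow> 1 \<le> fst q \<and> 1 \<le> snd q \<and> q \<notin> S \<and>
     (1 < fst q \<longrightarrow> (fst q - 1, snd q) \<in> S) \<and> (1 < snd q \<longrightarrow> (fst q, snd q - 1) \<in> S)"

lemma diag_R:
  assumes "Inv T S Th" "a = 0 \<or> b = 0 \<or> ((a, b) \<in> S \<and> (a+1, b+1) \<notin> S)"
  shows "diag S Th a b = R T a b"
  using assms unfolding Inv_def using diag_zero R_zero by metis

lemma dc_insert:
  assumes "dc S" "addable S (i, j)"
  shows "dc (insert (i, j) S)"
  unfolding dc_def
proof (intro allI impI)
  fix a b assume ab: "(a, b) \<in> insert (i, j) S"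
  show "1 \<le> a \<and> 1 \<le> b \<and> (\<forall>a' b'. 1 \<le> a' \<longrightarrow> a' \<le> a \<longrightarrow> 1 \<le> b' \<longrightarrow> b' \<le> b \<longrightarrow> (a', b') \<in> insert (i, j) S)"
  proof (cases "(a, b) = (i, j)")
    case True
    have "(a', b') \<in> insert (i, j) S" if "1 \<le> a'" "a' \<le> i" "1 \<le> b'" "b' \<le> j" for a' b'
    proof (cases "a' = i")
      case True
      then show ?thesis
      proof (cases "b' = j")
        case False
        then have "(i, j - 1) \<in> S" using assms(2) that unfolding addable_def by auto
        then show ?thesis using dcD[OF assms(1)] that True False by auto
      qed simp
    next
      case False
      then have "(i - 1, j) \<in> S" using assms(2) that unfolding addable_def by auto
      then show ?thesis using dcD[OF assms(1)] that False by auto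
    qed
    then show ?thesis using True assms(2) unfolding addable_def by auto
  next
    case False
    then show ?thesis using ab assms(1) unfolding dc_def by auto
  qed
qed

lemma step:
  assumes inv: "Inv T S Th" and ad: "addable S (i, j)"
  defines "Th' \<equiv> toggle_step S Th (i, j) (int (T (i, j)))"
  shows "Inv T (insert (i, j) S) Th'"
proof -
  have fin: "finite S" and dcS: "dc S" and nn: "\<forall>p\<in>S. 0 \<le> Th p"
    and monoR: "\<forall>a b. (a, b) \<in> S \<longrightarrow> (a, b+1) \<in> S \<longrightarrow> Th (a, b) \<le> Th (a, b+1)"
    and monoD: "\<forall>a b. (a, b) \<in> S \<longrightarrow> (a+1, b) \<in> S \<longrightarrow> Th (a, b) \<le> Th (a+1, b)"
    and ends: "\<forall>a b. (a, b) \<in> S \<longrightarrow> (a+1, b+1) \<notin> S \<longrightarrow> diag S Th a b = R T a b"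
    and wt: "sum Th S = sum (L T) S"
    using inv unfolding Inv_def by blast+
  have i1: "1 \<le> i" and j1: "1 \<le> j" and nin: "(i, j) \<notin> S"
    and up: "1 < i \<Longrightarrow> (i-1, j) \<in> S" and left: "1 < j \<Longrightarrow> (i, j-1) \<in> S"
    using ad unfolding addable_def by auto
  define S' where "S' = insert (i, j) S"
  have dcS': "dc S'" unfolding S'_def by (rule dc_insert[OF dcS ad])
  define x where "x = int (T (i, j))"
  have x0: "0 \<le> x" unfolding x_def by simp
  define m where "m = min i j"
  have m1: "1 \<le> m" using i1 j1 unfolding m_def by simp
  define g where "g = gS S Th"
  have gnn: "0 \<le> g q" for q unfolding g_def gS_def using nn by auto
  have gin: "q \<in> S \<Longrightarrow> g q = Th q" for q unfolding g_def gS_def by simp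
  define al where "al k = g (i - k, j - k + 1)" for k
  define ga where "ga k = g (i - k + 1, j - k)" for k
  define be where "be k = g (i - k, j - k)" for k
  have inS: "(i-k, j-k) \<in> S \<and> (i-k, j-k+1) \<in> S \<and> (i-k+1, j-k) \<in> S" if "1 \<le> k" "k < m" for k
  proof -
    have "1 < i" "1 < j" using that unfolding m_def by auto
    then have u: "(i-1, j) \<in> S" and l: "(i, j-1) \<in> S" using up left by auto
    show ?thesis using dcD[OF dcS u] dcD[OF dcS l] that unfolding m_def by auto
  qed
  have bnd: "be k \<le> al k \<and> be k \<le> ga k \<and> al (k+1) \<le> be k \<and> ga (k+1) \<le> be k" if "1 \<le> k" "k < m" for k
  proof -
    note ins = inS[OF that]
    have e1: "be k \<le> al k" unfolding al_def be_def using ins monoR gin by auto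
    have e2: "be k \<le> ga k" unfolding ga_def be_def using ins monoD gin
      by (metis Suc_eq_plus1 Suc_diff_le diff_le_self le_trans m_def min.bounded_iff nat_less_le that(2))
    have e3: "al (k+1) \<le> be k"
    proof (cases "(i - (k+1), j - k) \<in> S")
      case True
      have "i - (k+1) + 1 = i - k" using that unfolding m_def by auto
      then have "Th (i - (k+1), j - k) \<le> Th (i - k, j - k)" using monoD True ins by metis
      moreover have "j - (k+1) + 1 = j - k" using that unfolding m_def by auto
      ultimately show ?thesis unfolding al_def be_def using gin True ins by simp
    next
      case False
      have "j - (k+1) + 1 = j - k" using that unfolding m_def by auto
      then show ?thesis unfolding al_def be_def using False gnn by (simp add: g_def gS_def)
    qed
    have e4: "ga (k+1) \<le> be k"
    proof (cases "(i - k, j - (k+1)) \<in> S")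
      case True
      have "j - (k+1) + 1 = j - k" using that unfolding m_def by auto
      then have "Th (i - k, j - (k+1)) \<le> Th (i - k, j - k)" using monoR True ins by metis
      moreover have "i - (k+1) + 1 = i - k" using that unfolding m_def by auto
      ultimately show ?thesis unfolding ga_def be_def using gin True ins by simp
    next
      case False
      have "i - (k+1) + 1 = i - k" using that unfolding m_def by auto
      then show ?thesis unfolding ga_def be_def using False gnn by (simp add: g_def gS_def)
    qed
    show ?thesis using e1 e2 e3 e4 by blast
  qed
  have c0: "Th' (i, j) = max (al 1) (ga 1) + x"
    unfolding Th'_def x_def al_def ga_def g_def using ts_corner[OF i1 j1] i1 j1 by simp
  have cd: "Th' (i-k, j-k) = max (al (k+1)) (ga (k+1)) + min (al k) (ga k) - be k" if "1 \<le> k" "k < m" for k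
    unfolding Th'_def al_def ga_def be_def g_def using ts_diag that unfolding m_def by blast
  have co: "Th' p = g p" if "p \<noteq> (i, j)" "\<forall>k. 1 \<le> k \<longrightarrow> k < m \<longrightarrow> p \<noteq> (i-k, j-k)" for p
    unfolding Th'_def g_def using ts_other that unfolding m_def by blast
  obtain m' where mm: "m = Suc m'" using m1 by (cases m) auto
  have gS'_eq: "gS S' Th' (i-k, j-k) = Th' (i-k, j-k)" if "k < m" for k
  proof (cases "k = 0")
    case True then show ?thesis unfolding gS_def S'_def by simp
  next
    case False then show ?thesis using inS[of k] that unfolding gS_def S'_def by auto
  qed
  have Dsum: "diag S' Th' i j = (\<Sum>k<m. Th' (i-k, j-k))"
    unfolding diag_def m_def[symmetric] using gS'_eq by simp
  have Dsum2: "(\<Sum>k<m. Th' (i-k, j-k)) = Th' (i, j) + (\<Sum>k<m'. Th' (i - Suc k, j - Suc k))"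
    unfolding mm sum.lessThan_Suc_shift by simp
  define M where "M k = max (al (Suc k)) (ga (Suc k))" for k
  define N where "N k = min (al (Suc k)) (ga (Suc k))" for k
  have Dsum3: "(\<Sum>k<m'. Th' (i - Suc k, j - Suc k)) = (\<Sum>k<m'. M (Suc k) + N k - be (Suc k))"
  proof (rule sum.cong)
    fix k assume "k \<in> {..<m'}"
    then have "1 \<le> Suc k" "Suc k < m" using mm by auto
    then show "Th' (i - Suc k, j - Suc k) = M (Suc k) + N k - be (Suc k)"
      using cd[of "Suc k"] unfolding M_def N_def by simp
  qed simp
  have Nm: "N m' = 0"
  proof -
    have "al m = 0 \<or> ga m = 0"
    proof (cases "i \<le> j")
      case True then have "m = i" unfolding m_def by simp
      then show ?thesis unfolding al_def g_def using gS_out[OF dcS] by simp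
    next
      case False then have "m = j" unfolding m_def by simp
      then show ?thesis unfolding ga_def g_def using gS_out[OF dcS] by simp
    qed
    moreover have "0 \<le> al m" "0 \<le> ga m" unfolding al_def ga_def using gnn by auto
    ultimately show ?thesis unfolding N_def mm by auto
  qed
  have sMN: "(\<Sum>k<m. M k + N k) = (\<Sum>k<m. al (Suc k) + ga (Suc k))"
    unfolding M_def N_def by (rule sum.cong) auto
  have sM: "(\<Sum>k<m. M k) = M 0 + (\<Sum>k<m'. M (Suc k))" unfolding mm sum.lessThan_Suc_shift by simp
  have sN: "(\<Sum>k<m. N k) = (\<Sum>k<m'. N k)" unfolding mm using Nm by simp
  have sal: "(\<Sum>k<m. al (Suc k)) = diag S Th (i-1) j"
  proof -
    have "(\<Sum>k<m. al (Suc k)) = (\<Sum>k<m. gS S Th (i - 1 - k, j - k))"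
      unfolding al_def g_def by (rule sum.cong) (auto simp: m_def Suc_diff_Suc)
    also have "\<dots> = diag S Th (i-1) j" by (rule diag_ext[OF dcS]) (auto simp: m_def)
    finally show ?thesis .
  qed
  have sga: "(\<Sum>k<m. ga (Suc k)) = diag S Th i (j-1)"
  proof -
    have "(\<Sum>k<m. ga (Suc k)) = (\<Sum>k<m. gS S Th (i - k, j - 1 - k))"
      unfolding ga_def g_def by (rule sum.cong) (auto simp: m_def Suc_diff_Suc)
    also have "\<dots> = diag S Th i (j-1)" by (rule diag_ext[OF dcS]) (auto simp: m_def)
    finally show ?thesis .
  qed
  have sbe: "(\<Sum>k<m'. be (Suc k)) = diag S Th (i-1) (j-1)"
  proof -
    have "(\<Sum>k<m'. be (Suc k)) = (\<Sum>k<m'. gS S Th (i - 1 - k, j - 1 - k))"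
      unfolding be_def g_def by (rule sum.cong) auto
    also have "\<dots> = diag S Th (i-1) (j-1)" by (rule diag_ext[OF dcS]) (use mm in \<open>auto simp: m_def\<close>)
    finally show ?thesis .
  qed
  have Dval: "(\<Sum>k<m. Th' (i-k, j-k)) = x + diag S Th (i-1) j + diag S Th i (j-1) - diag S Th (i-1) (j-1)"
  proof -
    have "(\<Sum>k<m. Th' (i-k, j-k)) = M 0 + x + (\<Sum>k<m'. M (Suc k)) + (\<Sum>k<m'. N k) - (\<Sum>k<m'. be (Suc k))"
      unfolding Dsum2 Dsum3 c0 M_def by (simp add: sum.distrib sum_subtractf)
    also have "\<dots> = x + (\<Sum>k<m. M k + N k) - (\<Sum>k<m'. be (Suc k))"
      unfolding sum.distrib sM sN by simp
    moreover have "(\<Sum>k<m. M k + N k) = diag S Th (i-1) j + diag S Th i (j-1)"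
      using sMN sal sga by (simp only: sum.distrib)
    ultimately show ?thesis using sbe by linarith
  qed
  have notin1: "(i, j+1) \<notin> S" using dcD[OF dcS, of i "j+1" i j] nin i1 j1 by auto
  have notin2: "(i+1, j) \<notin> S" using dcD[OF dcS, of "i+1" j i j] nin i1 j1 by auto
  have r1: "diag S Th (i-1) j = R T (i-1) j"
  proof (cases "i = 1")
    case False then show ?thesis using diag_R[OF inv] up notin1 i1 by simp
  qed (auto intro: diag_R[OF inv])
  have r2: "diag S Th i (j-1) = R T i (j-1)"
  proof (cases "j = 1")
    case False then show ?thesis using diag_R[OF inv] left notin2 j1 by simp
  qed (auto intro: diag_R[OF inv])
  have r3: "diag S Th (i-1) (j-1) = R T (i-1) (j-1)"
  proof (cases "i = 1 \<or> j = 1")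
    case False
    then have i2: "1 < i" and j2: "1 < j" using i1 j1 by auto
    have "(i-1, j-1) \<in> S"
      by (rule dcD[OF dcS up[OF i2]]) (use i2 j2 in auto)
    moreover have "(i-1+1, j-1+1) \<notin> S" using nin i2 j2 by simp
    ultimately show ?thesis by (intro diag_R[OF inv]) blast
  next
    case True then show ?thesis by (intro diag_R[OF inv]) auto
  qed
  have Dfinal: "(\<Sum>k<m. Th' (i-k, j-k)) = R T i j"
    using Dval r1 r2 r3 R_step[OF i1 j1, of T] unfolding x_def by linarith
  have alnn: "0 \<le> al k" and ganni: "0 \<le> ga k" for k unfolding al_def ga_def using gnn by auto
  define Dg where "Dg = (\<lambda>k. (i - Suc k, j - Suc k)) ` {..<m'}"
  have DgS: "Dg \<subseteq> S" unfolding Dg_def using inS mm by auto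
  have injDg: "inj_on (\<lambda>k. (i - Suc k, j - Suc k)) {..<m'}"
    unfolding inj_on_def using mm by (auto simp: m_def)
  have w1: "sum Th' S' = Th' (i, j) + sum Th' S" unfolding S'_def using fin nin by simp
  have w2: "sum Th' S = sum Th' (S - Dg) + sum Th' Dg" by (rule sum.subset_diff[OF DgS fin])
  have w3: "sum Th S = sum Th (S - Dg) + sum Th Dg" by (rule sum.subset_diff[OF DgS fin])
  have w4: "sum Th' (S - Dg) = sum Th (S - Dg)"
  proof (rule sum.cong)
    fix p assume p: "p \<in> S - Dg"
    have "p \<noteq> (i, j)" using p nin by auto
    moreover have "\<forall>k. 1 \<le> k \<longrightarrow> k < m \<longrightarrow> p \<noteq> (i-k, j-k)"
    proof (intro allI impI)
      fix k assume k: "1 \<le> k" "k < m"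
      then have "(i-k, j-k) = (i - Suc (k-1), j - Suc (k-1))" "k - 1 < m'" using mm by auto
      then have "(i-k, j-k) \<in> Dg" unfolding Dg_def by blast
      then show "p \<noteq> (i-k, j-k)" using p by auto
    qed
    ultimately show "Th' p = Th p" using co gin p by auto
  qed simp
  have w5: "sum Th' Dg = (\<Sum>k<m'. Th' (i - Suc k, j - Suc k))"
    unfolding Dg_def by (simp add: sum.reindex[OF injDg])
  have w6: "sum Th Dg = R T (i-1) (j-1)"
  proof -
    have "sum Th Dg = (\<Sum>k<m'. Th (i - Suc k, j - Suc k))"
      unfolding Dg_def by (simp add: sum.reindex[OF injDg])
    also have "\<dots> = (\<Sum>k<m'. be (Suc k))"
    proof (rule sum.cong)
      fix k assume "k \<in> {..<m'}"
      then have "(i - Suc k, j - Suc k) \<in> S" using inS[of "Suc k"] mm by auto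
      then show "Th (i - Suc k, j - Suc k) = be (Suc k)" unfolding be_def using gin by simp
    qed simp
    finally show ?thesis using sbe r3 by simp
  qed
  have wL: "sum (L T) S' = R T i j - R T (i-1) (j-1) + sum (L T) S"
    unfolding S'_def using fin nin by (simp add: L_def)
  have wfinal: "sum Th' S' = sum (L T) S'"
    using w1 w2 w3 w4 w5 w6 wL wt Dfinal Dsum2 by linarith
  have endsS': "\<forall>a b. (a, b) \<in> S' \<longrightarrow> (a+1, b+1) \<notin> S' \<longrightarrow> diag S' Th' a b = R T a b"
  proof (intro allI impI)
    fix a b assume ab: "(a, b) \<in> S'" and nab: "(a+1, b+1) \<notin> S'"
    show "diag S' Th' a b = R T a b"
    proof (cases "(a, b) = (i, j)")
      case True then show ?thesis using Dsum Dfinal by simp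
    next
      case False
      then have abS: "(a, b) \<in> S" and nabS: "(a+1, b+1) \<notin> S" using ab nab unfolding S'_def by auto
      have "diag S' Th' a b = diag S Th a b"
        unfolding diag_def
      proof (rule sum.cong)
        fix k assume "k \<in> {..<min a b}"
        then have kab: "k < a" "k < b" by auto
        have pS: "(a-k, b-k) \<in> S" using dcD[OF dcS abS] kab by auto
        have pne: "(a-k, b-k) \<noteq> (i, j)" using pS nin by auto
        have pnd: "\<forall>k'. 1 \<le> k' \<longrightarrow> k' < m \<longrightarrow> (a-k, b-k) \<noteq> (i-k', j-k')"
        proof (intro allI impI notI)
          fix k' assume k': "1 \<le> k'" "k' < m" and eq: "(a-k, b-k) = (i-k', j-k')"
          have ki: "k' < i" "k' < j" using k' unfolding m_def by auto
          have e1: "a + k' = i + k" and e2: "b + k' = j + k" using eq kab ki by auto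
          show False
          proof (cases "k' \<le> k")
            case True
            then have "(i, j) \<in> S" using dcD[OF dcS abS, of i j] e1 e2 i1 j1 by auto
            then show False using nin by simp
          next
            case False
            show False
            proof (cases "k' = k + 1")
              case True
              then have "(a+1, b+1) = (i, j)" using e1 e2 by auto
              then show False using nab unfolding S'_def by simp
            next
              case False2: False
              then have "1 < i" using False e1 kab by auto
              then have "(i-1, j) \<in> S" using up by simp
              then have "(a+1, b+1) \<in> S" using dcD[OF dcS, of "i-1" j "a+1" "b+1"] e1 e2 False False2 by auto
              then show False using nabS by simp
            qed
          qed
        qed
        have "Th' (a-k, b-k) = g (a-k, b-k)" using co pne pnd by blast
        then show "gS S' Th' (a-k, b-k) = gS S Th (a-k, b-k)"
          using pS unfolding gS_def g_def S'_def by simp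
      qed simp
      then show ?thesis using ends abS nabS by simp
    qed
  qed
  have notdiag_row: "\<forall>k'. 1 \<le> k' \<longrightarrow> k' < m \<longrightarrow> (i, b) \<noteq> (i-k', j-k')" for b
    unfolding m_def by auto
  have notdiag_col: "\<forall>k'. 1 \<le> k' \<longrightarrow> k' < m \<longrightarrow> (a, j) \<noteq> (i-k', j-k')" for a
    unfolding m_def by auto
  have nnS': "\<forall>p\<in>S'. 0 \<le> Th' p"
  proof
    fix p assume p: "p \<in> S'"
    show "0 \<le> Th' p"
    proof (cases "p = (i, j)")
      case True then show ?thesis using c0 alnn ganni x0 by (simp add: max_def)
    next
      case False
      show ?thesis
      proof (cases "\<exists>k. 1 \<le> k \<and> k < m \<and> p = (i-k, j-k)")
        case True
        then obtain k where k: "1 \<le> k" "k < m" "p = (i-k, j-k)" by blast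
        have "0 \<le> max (al (k+1)) (ga (k+1))" using alnn by (simp add: le_max_iff_disj)
        moreover have "be k \<le> min (al k) (ga k)" using bnd[OF k(1,2)] by simp
        moreover have "Th' p = max (al (k+1)) (ga (k+1)) + min (al k) (ga k) - be k" using cd[OF k(1,2)] k(3) by simp
        ultimately show ?thesis by linarith
      next
        case False2: False
        then have "Th' p = g p" using co False by blast
        then show ?thesis using gnn by simp
      qed
    qed
  qed
  have monoR': "\<forall>a b. (a, b) \<in> S' \<longrightarrow> (a, b+1) \<in> S' \<longrightarrow> Th' (a, b) \<le> Th' (a, b+1)"
  proof (intro allI impI)
    fix a b assume A: "(a, b) \<in> S'" and B: "(a, b+1) \<in> S'"
    have b1: "1 \<le> b" using dc_pos[OF dcS' A] by simp
    show "Th' (a, b) \<le> Th' (a, b+1)"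
    proof (cases "(a, b) = (i, j)")
      case True
      then have "(i, j+1) \<in> S" using B unfolding S'_def by auto
      then have "(i, j) \<in> S" using dcD[OF dcS, of i "j+1" i j] i1 j1 by auto
      then show ?thesis using nin by simp
    next
      case nij: False
      show ?thesis
      proof (cases "(a, b+1) = (i, j)")
        case True
        then have ab: "a = i" "b = j - 1" "1 < j" using b1 by auto
        have "Th' (a, b) = g (i, j-1)" using co[of "(a, b)"] nij notdiag_row[of b] ab by simp
        also have "\<dots> = ga 1" unfolding ga_def using i1 by simp
        also have "\<dots> \<le> Th' (a, b+1)" using True c0 x0 by simp
        finally show ?thesis .
      next
        case nij2: False
        show ?thesis
        proof (cases "\<exists>k. 1 \<le> k \<and> k < m \<and> (a, b) = (i-k, j-k)")
          case True
          then obtain k where k: "1 \<le> k" "k < m" "(a, b) = (i-k, j-k)" by blast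
          have kk: "k < i" "k < j" using k unfolding m_def by auto
          have "\<forall>k'. 1 \<le> k' \<longrightarrow> k' < m \<longrightarrow> (a, b+1) \<noteq> (i-k', j-k')"
            using k kk unfolding m_def by auto
          then have "Th' (a, b+1) = g (i-k, j-k+1)" using co nij2 k by simp
          also have "\<dots> = al k" unfolding al_def ..
          finally have e: "Th' (a, b+1) = al k" .
          have "Th' (a, b) = max (al (k+1)) (ga (k+1)) + min (al k) (ga k) - be k"
            using cd[OF k(1,2)] k(3) by simp
          then show ?thesis using e bnd[OF k(1,2)] by (simp add: max_def min_def)
        next
          case nd1: False
          show ?thesis
          proof (cases "\<exists>k. 1 \<le> k \<and> k < m \<and> (a, b+1) = (i-k, j-k)")
            case True
            then obtain k where k: "1 \<le> k" "k < m" "(a, b+1) = (i-k, j-k)" by blast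
            have kk: "k < i" "k < j" using k unfolding m_def by auto
            have "Th' (a, b) = g (a, b)" using co nij nd1 by blast
            also have "\<dots> = ga (k+1)" unfolding ga_def using k kk by (auto intro: arg_cong[where f=g])
            finally have e: "Th' (a, b) = ga (k+1)" .
            have "Th' (a, b+1) = max (al (k+1)) (ga (k+1)) + min (al k) (ga k) - be k"
              using cd[OF k(1,2)] k(3) by simp
            then show ?thesis using e bnd[OF k(1,2)] by (simp add: max_def min_def)
          next
            case nd2: False
            have "Th' (a, b) = g (a, b)" using co nij nd1 by blast
            moreover have "Th' (a, b+1) = g (a, b+1)" using co nij2 nd2 by blast
            moreover have "(a, b) \<in> S" "(a, b+1) \<in> S" using A B nij nij2 unfolding S'_def by auto
            ultimately show ?thesis using monoR gin by simp
          qed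
        qed
      qed
    qed
  qed
  have monoD': "\<forall>a b. (a, b) \<in> S' \<longrightarrow> (a+1, b) \<in> S' \<longrightarrow> Th' (a, b) \<le> Th' (a+1, b)"
  proof (intro allI impI)
    fix a b assume A: "(a, b) \<in> S'" and B: "(a+1, b) \<in> S'"
    have a1: "1 \<le> a" using dc_pos[OF dcS' A] by simp
    show "Th' (a, b) \<le> Th' (a+1, b)"
    proof (cases "(a, b) = (i, j)")
      case True
      then have "(i+1, j) \<in> S" using B unfolding S'_def by auto
      then have "(i, j) \<in> S" using dcD[OF dcS, of "i+1" j i j] i1 j1 by auto
      then show ?thesis using nin by simp
    next
      case nij: False
      show ?thesis
      proof (cases "(a+1, b) = (i, j)")
        case True
        then have ab: "a = i - 1" "b = j" "1 < i" using a1 by auto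
        have "Th' (a, b) = g (i-1, j)" using co[of "(a, b)"] nij notdiag_col[of a] ab by simp
        also have "\<dots> = al 1" unfolding al_def using j1 by simp
        also have "\<dots> \<le> Th' (a+1, b)" using True c0 x0 by simp
        finally show ?thesis .
      next
        case nij2: False
        show ?thesis
        proof (cases "\<exists>k. 1 \<le> k \<and> k < m \<and> (a, b) = (i-k, j-k)")
          case True
          then obtain k where k: "1 \<le> k" "k < m" "(a, b) = (i-k, j-k)" by blast
          have kk: "k < i" "k < j" using k unfolding m_def by auto
          have "\<forall>k'. 1 \<le> k' \<longrightarrow> k' < m \<longrightarrow> (a+1, b) \<noteq> (i-k', j-k')"
            using k kk unfolding m_def by auto
          then have "Th' (a+1, b) = g (i-k+1, j-k)" using co nij2 k by simp
          also have "\<dots> = ga k" unfolding ga_def ..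
          finally have e: "Th' (a+1, b) = ga k" .
          have "Th' (a, b) = max (al (k+1)) (ga (k+1)) + min (al k) (ga k) - be k"
            using cd[OF k(1,2)] k(3) by simp
          then show ?thesis using e bnd[OF k(1,2)] by (simp add: max_def min_def)
        next
          case nd1: False
          show ?thesis
          proof (cases "\<exists>k. 1 \<le> k \<and> k < m \<and> (a+1, b) = (i-k, j-k)")
            case True
            then obtain k where k: "1 \<le> k" "k < m" "(a+1, b) = (i-k, j-k)" by blast
            have kk: "k < i" "k < j" using k unfolding m_def by auto
            have "Th' (a, b) = g (a, b)" using co nij nd1 by blast
            also have "\<dots> = al (k+1)" unfolding al_def using k kk by (auto intro: arg_cong[where f=g])
            finally have e: "Th' (a, b) = al (k+1)" .
            have "Th' (a+1, b) = max (al (k+1)) (ga (k+1)) + min (al k) (ga k) - be k"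
              using cd[OF k(1,2)] k(3) by simp
            then show ?thesis using e bnd[OF k(1,2)] by (simp add: max_def min_def)
          next
            case nd2: False
            have "Th' (a, b) = g (a, b)" using co nij nd1 by blast
            moreover have "Th' (a+1, b) = g (a+1, b)" using co nij2 nd2 by blast
            moreover have "(a, b) \<in> S" "(a+1, b) \<in> S" using A B nij nij2 unfolding S'_def by auto
            ultimately show ?thesis using monoD gin by simp
          qed
        qed
      qed
    qed
  qed
  show ?thesis unfolding Inv_def S'_def[symmetric]
    using fin dcS' nnS' monoR' monoD' endsS' wfinal unfolding S'_def by blast
qed

fun valid_seq :: "(nat \<times> nat) set \<Rightarrow> (nat \<times> nat) list \<Rightarrow> bool" where
  "valid_seq S [] = True"
| "valid_seq S (b # bs) = (addable S b \<and> valid_seq (insert b S) bs)"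

lemma valid_seq_append: "valid_seq S (xs @ ys) = (valid_seq S xs \<and> valid_seq (S \<union> set xs) ys)"
  by (induction xs arbitrary: S) auto

lemma fold_inv:
  assumes "Inv T S Th" "valid_seq S bs"
  shows "Inv T (snd (foldl (\<lambda>(Th, S) b. (toggle_step S Th b (int (T b)), insert b S)) (Th, S) bs))
                (fst (foldl (\<lambda>(Th, S) b. (toggle_step S Th b (int (T b)), insert b S)) (Th, S) bs))
       \<and> snd (foldl (\<lambda>(Th, S) b. (toggle_step S Th b (int (T b)), insert b S)) (Th, S) bs) = S \<union> set bs"
  using assms
proof (induction bs arbitrary: Th S)
  case Nil then show ?case by simp
next
  case (Cons b bs)
  obtain i j where b: "b = (i, j)" by (cases b)
  have ad: "addable S (i, j)" and vs: "valid_seq (insert b S) bs" using Cons.prems b by auto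
  have "Inv T (insert (i, j) S) (toggle_step S Th (i, j) (int (T (i, j))))"
    by (rule step[OF Cons.prems(1) ad])
  then have "Inv T (insert b S) (toggle_step S Th b (int (T b)))" using b by simp
  note H = Cons.IH[OF this vs]
  let ?F = "\<lambda>(Th, S) b. (toggle_step S Th b (int (T b)), insert b S)"
  have E: "foldl ?F (Th, S) (b # bs) = foldl ?F (toggle_step S Th b (int (T b)), insert b S) bs" by simp
  have U: "insert b S \<union> set bs = S \<union> set (b # bs)" by auto
  show ?case unfolding E using H unfolding U by blast
qed

definition rowsS :: "nat list \<Rightarrow> nat \<Rightarrow> (nat \<times> nat) set" where
  "rowsS la k = {(i, j). 1 \<le> i \<and> i \<le> k \<and> 1 \<le> j \<and> j \<le> la ! (i - 1)}"

lemma part_mono: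
  assumes "is_partition la" "a < b" "b < length la"
  shows "la ! b \<le> la ! a"
  using assms unfolding is_partition_def sorted_wrt_iff_nth_less by auto

lemma row_valid:
  assumes P: "is_partition la" and r: "1 \<le> r" "r \<le> length la"
  shows "j \<le> la ! (r-1) \<Longrightarrow> valid_seq (rowsS la (r-1)) (map (\<lambda>j. (r, j)) [1..<j+1])"
proof (induction j)
  case 0 then show ?case by simp
next
  case (Suc j)
  have IH: "valid_seq (rowsS la (r-1)) (map (\<lambda>j. (r, j)) [1..<j+1])" using Suc by simp
  have st: "set (map (\<lambda>j. (r, j)) [1..<j+1]) = {(r, b) | b. 1 \<le> b \<and> b \<le> j}" by auto
  have ad: "addable (rowsS la (r-1) \<union> {(r, b) | b. 1 \<le> b \<and> b \<le> j}) (r, Suc j)"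
    unfolding addable_def
  proof (intro conjI impI)
    show "1 \<le> fst (r, Suc j)" "1 \<le> snd (r, Suc j)" using r by auto
    show "(r, Suc j) \<notin> rowsS la (r-1) \<union> {(r, b) | b. 1 \<le> b \<and> b \<le> j}"
      unfolding rowsS_def by auto
  next
    assume "1 < fst (r, Suc j)"
    then have "r - 2 < r - 1" "r - 1 < length la" using r by auto
    then have "la ! (r-1) \<le> la ! (r-2)" using part_mono[OF P] by blast
    then have "Suc j \<le> la ! (r - 1 - 1)" using Suc.prems by (simp add: numeral_2_eq_2)
    then show "(fst (r, Suc j) - 1, snd (r, Suc j)) \<in> rowsS la (r-1) \<union> {(r, b) | b. 1 \<le> b \<and> b \<le> j}"
      unfolding rowsS_def using \<open>1 < fst (r, Suc j)\<close> by auto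
  next
    assume "1 < snd (r, Suc j)"
    then show "(fst (r, Suc j), snd (r, Suc j) - 1) \<in> rowsS la (r-1) \<union> {(r, b) | b. 1 \<le> b \<and> b \<le> j}"
      by auto
  qed
  have "[1..<Suc j + 1] = [1..<j+1] @ [Suc j]" by simp
  then show ?case using IH ad st by (simp add: valid_seq_append)
qed

lemma all_valid:
  assumes P: "is_partition la"
  shows "k \<le> length la \<Longrightarrow>
    valid_seq {} (concat (map (\<lambda>i. map (\<lambda>j. (i, j)) [1..<la ! (i - 1) + 1]) [1..<k + 1]))
    \<and> set (concat (map (\<lambda>i. map (\<lambda>j. (i, j)) [1..<la ! (i - 1) + 1]) [1..<k + 1])) = rowsS la k"
proof (induction k)
  case 0 then show ?case by (simp add: rowsS_def)
next
  case (Suc k)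
  have IH: "valid_seq {} (concat (map (\<lambda>i. map (\<lambda>j. (i, j)) [1..<la ! (i - 1) + 1]) [1..<k + 1]))"
    "set (concat (map (\<lambda>i. map (\<lambda>j. (i, j)) [1..<la ! (i - 1) + 1]) [1..<k + 1])) = rowsS la k"
    using Suc by auto
  have rv: "valid_seq (rowsS la k) (map (\<lambda>j. (Suc k, j)) [1..<la ! k + 1])"
    using row_valid[OF P, of "Suc k" "la ! k"] Suc.prems by simp
  have up: "[1..<Suc k + 1] = [1..<k+1] @ [Suc k]" by simp
  have rs: "rowsS la k \<union> set (map (\<lambda>j. (Suc k, j)) [1..<la ! k + 1]) = rowsS la (Suc k)"
    unfolding rowsS_def by (auto simp: le_Suc_eq)
  have c: "concat (map (\<lambda>i. map (\<lambda>j. (i, j)) [1..<la ! (i - 1) + 1]) ([1..<k+1] @ [Suc k]))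
     = concat (map (\<lambda>i. map (\<lambda>j. (i, j)) [1..<la ! (i - 1) + 1]) [1..<k+1]) @ map (\<lambda>j. (Suc k, j)) [1..<la ! k + 1]"
    by simp
  show ?case unfolding up c valid_seq_append set_append using IH rv rs by simp
qed

lemma Inv_empty: "Inv T {} (\<lambda>_. 0)"
  unfolding Inv_def dc_def by simp

lemma toggle_sum:
  assumes P: "is_partition la"
  shows "(\<Sum>b\<in>shape la. toggle la T b) = sum (L T) (shape la)"
proof -
  have av: "valid_seq {} (boxes_order la)" and sb: "set (boxes_order la) = shape la"
    using all_valid[OF P, of "length la"] unfolding boxes_order_def rowsS_def shape_def by auto
  let ?r = "foldl (\<lambda>(Th, S) b. (toggle_step S Th b (int (T b)), insert b S)) ((\<lambda>_. 0), {}) (boxes_order la)"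
  have H: "Inv T (snd ?r) (fst ?r)" "snd ?r = {} \<union> set (boxes_order la)"
    using fold_inv[OF Inv_empty av, of T] by blast+
  have "sum (fst ?r) (snd ?r) = sum (L T) (snd ?r)" using H(1) unfolding Inv_def by blast
  then show ?thesis unfolding toggle_def using H(2) sb by simp
qed

lemma shape_fin_set:
  assumes P: "is_partition la"
  shows "set (boxes_order la) = shape la"
  using all_valid[OF P, of "length la"] unfolding boxes_order_def rowsS_def shape_def by auto

lemma shape_dc:
  assumes P: "is_partition la"
  shows "dc (shape la)"
  unfolding dc_def
proof (intro allI impI)
  fix a b assume ab: "(a, b) \<in> shape la"
  have "\<forall>a' b'. 1 \<le> a' \<longrightarrow> a' \<le> a \<longrightarrow> 1 \<le> b' \<longrightarrow> b' \<le> b \<longrightarrow> (a', b') \<in> shape la"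
  proof (intro allI impI)
    fix a' b' assume h: "1 \<le> a'" "a' \<le> a" "1 \<le> b'" "b' \<le> b"
    have "la ! (a-1) \<le> la ! (a'-1)"
    proof (cases "a' = a")
      case False
      then show ?thesis using part_mono[OF P, of "a'-1" "a-1"] h ab unfolding shape_def by auto
    qed simp
    then show "(a', b') \<in> shape la" using h ab unfolding shape_def by auto
  qed
  moreover have "1 \<le> a" "1 \<le> b" using ab unfolding shape_def by auto
  ultimately show "1 \<le> a \<and> 1 \<le> b \<and> (\<forall>a' b'. 1 \<le> a' \<longrightarrow> a' \<le> a \<longrightarrow> 1 \<le> b' \<longrightarrow> b' \<le> b \<longrightarrow> (a', b') \<in> shape la)"
    by blast
qed

lemma hook_sum:
  assumes P: "is_partition la"
  shows "sum (L T) (shape la) = (\<Sum>(i, j)\<in>shape la. int (T (i, j)) * int (hook_len la i j))"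
proof -
  let ?S = "shape la"
  let ?f = "\<lambda>p. int (T p)"
  have fin: "finite ?S" using shape_fin_set[OF P] by (metis List.finite_set)
  have dcs: "dc ?S" by (rule shape_dc[OF P])
  define Hk where "Hk q = {1..fst q}\<times>{1..snd q} - {1..fst q - 1}\<times>{1..snd q - 1}" for q :: "nat \<times> nat"
  have HkS: "Hk q \<subseteq> ?S" if "q \<in> ?S" for q
  proof
    fix p assume "p \<in> Hk q"
    then have "1 \<le> fst p" "fst p \<le> fst q" "1 \<le> snd p" "snd p \<le> snd q" unfolding Hk_def by auto
    then show "p \<in> ?S" using dcD[OF dcs, of "fst q" "snd q" "fst p" "snd p"] that by auto
  qed
  have s1: "L T q = (\<Sum>p\<in>?S. if p \<in> Hk q then ?f p else 0)" if q: "q \<in> ?S" for q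
  proof -
    have "L T q = sum ?f (Hk q)"
      unfolding L_def R_def Hk_def by (rule sum_diff[symmetric]) auto
    also have "\<dots> = sum ?f {p \<in> ?S. p \<in> Hk q}"
    proof -
      have hq: "Hk q = {p \<in> ?S. p \<in> Hk q}" using HkS[OF q] by blast
      show ?thesis by (rule arg_cong[OF hq])
    qed
    also have "\<dots> = (\<Sum>p\<in>?S. if p \<in> Hk q then ?f p else 0)" by (rule sum.inter_filter[OF fin])
    finally show ?thesis .
  qed
  have "sum (L T) ?S = (\<Sum>q\<in>?S. \<Sum>p\<in>?S. if p \<in> Hk q then ?f p else 0)"
    using s1 by (rule sum.cong[OF refl])
  also have "\<dots> = (\<Sum>p\<in>?S. \<Sum>q\<in>?S. if p \<in> Hk q then ?f p else 0)" by (rule sum.swap)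
  also have "\<dots> = (\<Sum>p\<in>?S. ?f p * int (hook_len la (fst p) (snd p)))"
  proof (rule sum.cong[OF refl])
    fix p assume p: "p \<in> ?S"
    have "(\<Sum>q\<in>?S. if p \<in> Hk q then ?f p else 0) = sum (\<lambda>_. ?f p) {q \<in> ?S. p \<in> Hk q}"
      by (rule sum.inter_filter[OF fin, symmetric])
    also have "{q \<in> ?S. p \<in> Hk q} = hook la (fst p) (snd p)"
    proof -
      obtain a b where pab: "p = (a, b)" by (cases p)
      have ab1: "1 \<le> a" "1 \<le> b" using dc_pos[OF dcs] p pab by auto
      have "(c, d) \<in> ?S \<and> (a, b) \<in> Hk (c, d) \<longleftrightarrow> (c, d) \<in> hook la a b" for c d
      proof -
        have "(a, b) \<in> Hk (c, d) \<longleftrightarrow> (a \<le> c \<and> b \<le> d \<and> (a = c \<or> b = d))"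
          unfolding Hk_def using ab1 by auto
        then show ?thesis unfolding hook_def by auto
      qed
      then show ?thesis unfolding pab by auto
    qed
    finally show "(\<Sum>q\<in>?S. if p \<in> Hk q then ?f p else 0) = ?f p * int (hook_len la (fst p) (snd p))"
      unfolding hook_len_def by simp
  qed
  also have "\<dots> = (\<Sum>(i, j)\<in>?S. int (T (i, j)) * int (hook_len la i j))"
    by (rule sum.cong) auto
  finally show ?thesis .
qed

theorem proposition3p1:
  fixes la :: "nat list" and T :: "nat \<times> nat \<Rightarrow> nat"
  assumes "is_partition la"
  shows "(\<Sum>b\<in>shape la. toggle la T b)
         = (\<Sum>(i, j)\<in>shape la. int (T (i, j)) * int (hook_len la i j))"
  using toggle_sum[OF assms] hook_sum[OF assms] by simp

end
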